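(* Let $\mathcal{X},\mathcal{Y}\subset\mathbb{R}^d$ be finite sets in coupled general position and let $Q=Q_{\mathcal{X}}\sqcup Q_{\mathcal{Y}}$ be a simplex of $\mathcal{A}^{\mathrm{co}}_\infty(\mathcal{X},\mathcal{Y})$ with $|Q|=m+1$, $Q_{\mathcal{X}}=\{x_1,\dots,x_l\}\subset\mathcal{X}$ and $Q_{\mathcal{Y}}=\{y_1,\dots,y_{m-l+1}\}\subset\mathcal{Y}$ both nonempty. Consider the relaxed problem $$r_{\mathrm{rel}}^2(Q)=\min_{c\in\mathbb{R}^d}\max\{\|c-x_1\|^2,\|c-y_1\|^2\}\quad\text{subject to } Ac=b,$$ where $A$ is the matrix with rows $(x_2-x_1)^T,\dots,(x_l-x_1)^T,(y_2-y_1)^T,\dots,(y_{m-l+1}-y_1)^T$ and $b=\tfrac12\big(\|x_2\|^2-\|x_1\|^2,\dots,\|x_l\|^2-\|x_1\|^2,\|y_2\|^2-\|y_1\|^2,\dots,\|y_{m-l+1}\|^2-\|y_1\|^2\big)^T$ (so $Ac=b$ says $c$ is equidistant from all points of $Q_{\mathcal{X}}$ and equidistant from all points of $Q_{\mathcal{Y}}$). Let $c_0$ satisfy $Ac_0=b$, let $F\in\mathbb{R}^{d\times(d-m+1)}$ have orthonormal columns forming a basis of $\ker A$, and set $s_x=F^T(x_1-c_0)$, $s_y=F^T(y_1-c_0)$, and $r_x(x_1)=\|Fs_x+c_0-x_1\|$, $r_x(y_1)=\|Fs_x+c_0-y_1\|$, $r_y(x_1)=\|Fs_y+c_0-x_1\|$,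 $r_y(y_1)=\|Fs_y+c_0-y_1\|$. Then $$r_{\mathrm{rel}}(Q)=\begin{cases} r_x(x_1) & \text{if } r_x(x_1)\ge r_x(y_1),\\ r_y(y_1) & \text{if } r_y(x_1)\le r_y(y_1),\\ R(Q) & \text{otherwise},\end{cases}$$ where $R(Q)$ is the radius of the minimal circumsphere of $Q$ in $\mathbb{R}^d$ (the smallest sphere in $\mathbb{R}^d$ passing through all points of $Q$).
   Context: For finite $\mathcal{Z}\subset\mathbb{R}^d$, $\mathrm{Vor}(z,\mathcal{Z})=\{w:\|z-w\|\le\|z'-w\|\ \forall z'\in\mathcal{Z}\}$. $\mathcal{A}^{\mathrm{co}}_\infty(\mathcal{X},\mathcal{Y})$ is the abstract simplicial complex on the disjoint union of $\mathcal{X}$ and $\mathcal{Y}$ consisting of all $Q=Q_{\mathcal{X}}\sqcup Q_{\mathcal{Y}}$ with $\bigcap_{x\in Q_{\mathcal{X}}}\mathrm{Vor}(x,\mathcal{X})\cap\bigcap_{y\in Q_{\mathcal{Y}}}\mathrm{Vor}(y,\mathcal{Y})\ne\emptyset$. A finite $P\subset\mathbb{R}^d$ is in general position if for every $Q\subset P$ with $|Q|=d+1$ the points of $Q$ do not lie on a $(d-1)$-dimensional affine flat and no point of $P\setminus Q$ lies on the circumsphere of $Q$. $P_1,P_2$ are in coupled general position if each is in general position and, with $\hat P_1=P_1\times\{0\}$, $\hat P_2=P_2\times\{1\}\subset\mathbb{R}^{d+1}$, for all $\hat Q_1\subset\hat P_1,\hat Q_2\subset\hat P_2$ with $|\hat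 Q_1\cup\hat Q_2|=d+2$, no point of $(\hat P_1\setminus\hat Q_1)\cup(\hat P_2\setminus\hat Q_2)$ lies on the circumsphere of $\hat Q_1\cup\hat Q_2$. Under these assumptions the rows of $A$ are linearly independent. *)

theory Defs
  imports "HOL-Analysis.Analysis"
begin

definition Vor :: "'a::metric_space \<Rightarrow> 'a set \<Rightarrow> 'a set" where
  "Vor z Z = {w. \<forall>z'\<in>Z. dist z w \<le> dist z' w}"

definition co_simplex :: "'a::metric_space set \<Rightarrow> 'a set \<Rightarrow> 'a set \<Rightarrow> 'a set \<Rightarrow> bool" where
  "co_simplex X Y QX QY \<longleftrightarrow> QX \<subseteq> X \<and> QY \<subseteq> Y \<and>
     (\<Inter>x\<in>QX. Vor x X) \<inter> (\<Inter>y\<in>QY. Vor y Y) \<noteq> {}"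

text \<open>The circumsphere of Q: the sphere through all points of Q whose centre lies in the
  affine hull of Q (unique whenever it exists).\<close>
definition circumsphere :: "'a::euclidean_space set \<Rightarrow> 'a \<Rightarrow> real \<Rightarrow> bool" where
  "circumsphere Q c r \<longleftrightarrow> c \<in> affine hull Q \<and> (\<forall>q\<in>Q. dist c q = r)"

definition general_position :: "'a::euclidean_space set \<Rightarrow> bool" where
  "general_position P \<longleftrightarrow>
     (\<forall>Q. Q \<subseteq> P \<and> card Q = DIM('a) + 1 \<longrightarrow>
        \<not> affine_dependent Q \<and>
        (\<forall>c r. circumsphere Q c r \<longrightarrow> (\<forall>p\<in>P - Q. dist c p \<noteq> r)))"

definition lift :: "real \<Rightarrow> 'a set \<Rightarrow> ('a \<times> real) set" where
  "lift t P = (\<lambda>x. (x, t)) ` P"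

definition coupled_general_position :: "'a::euclidean_space set \<Rightarrow> 'a set \<Rightarrow> bool" where
  "coupled_general_position P1 P2 \<longleftrightarrow>
     general_position P1 \<and> general_position P2 \<and>
     (\<forall>Q1 Q2. Q1 \<subseteq> lift 0 P1 \<and> Q2 \<subseteq> lift 1 P2 \<and> card (Q1 \<union> Q2) = DIM('a) + 2 \<longrightarrow>
        (\<forall>c r. circumsphere (Q1 \<union> Q2) c r \<longrightarrow>
           (\<forall>p\<in>(lift 0 P1 - Q1) \<union> (lift 1 P2 - Q2). dist c p \<noteq> r)))"

text \<open>The affine constraint A c = b, written row by row (the row for x1 / y1 itself is trivial).\<close>
definition equi_set :: "'a::euclidean_space set \<Rightarrow> 'a set \<Rightarrow> 'a \<Rightarrow> 'a \<Rightarrow> 'a set" where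
  "equi_set QX QY x1 y1 = {c.
     (\<forall>x\<in>QX. inner (x - x1) c = (norm x ^ 2 - norm x1 ^ 2) / 2) \<and>
     (\<forall>y\<in>QY. inner (y - y1) c = (norm y ^ 2 - norm y1 ^ 2) / 2)}"

definition kerA :: "'a::euclidean_space set \<Rightarrow> 'a set \<Rightarrow> 'a \<Rightarrow> 'a \<Rightarrow> 'a set" where
  "kerA QX QY x1 y1 = {v.
     (\<forall>x\<in>QX. inner (x - x1) v = 0) \<and> (\<forall>y\<in>QY. inner (y - y1) v = 0)}"

definition r_rel :: "'a::euclidean_space set \<Rightarrow> 'a set \<Rightarrow> 'a \<Rightarrow> 'a \<Rightarrow> real" where
  "r_rel QX QY x1 y1 =
     sqrt (Inf ((\<lambda>c. max ((norm (c - x1))\<^sup>2) ((norm (c - y1))\<^sup>2)) ` equi_set QX QY x1 y1))"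

definition min_circumradius :: "'a::euclidean_space set \<Rightarrow> real" where
  "min_circumradius Q = Inf {r. \<exists>c. \<forall>q\<in>Q. dist c q = r}"

end

theory Submission
  imports Defs
begin

lemma proj_props:
  fixes Fb :: "'a::euclidean_space set"
  assumes "pairwise orthogonal Fb" "\<forall>f\<in>Fb. norm f = 1"
  shows "(\<Sum>f\<in>Fb. inner f v *\<^sub>R f) \<in> span Fb"
    and "\<And>k. k \<in> span Fb \<Longrightarrow> inner k (v - (\<Sum>f\<in>Fb. inner f v *\<^sub>R f)) = 0"
proof -
  show "(\<Sum>f\<in>Fb. inner f v *\<^sub>R f) \<in> span Fb"
    by (intro span_sum span_scale span_base)
  fix k assume k: "k \<in> span Fb"
  have eq: "(\<Sum>b\<in>Fb. (b \<bullet> v / (b \<bullet> b)) *\<^sub>R b) = (\<Sum>f\<in>Fb. inner f v *\<^sub>R f)"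
    using assms(2) by (intro sum.cong) (auto simp: norm_eq_1)
  show "inner k (v - (\<Sum>f\<in>Fb. inner f v *\<^sub>R f)) = 0"
    using Gram_Schmidt_step[OF assms(1) k, of v] unfolding eq orthogonal_def .
qed

lemma equi_iff:
  fixes c x x1 :: "'a::real_inner"
  shows "inner (x - x1) c = (norm x ^ 2 - norm x1 ^ 2) / 2 \<longleftrightarrow> dist c x = dist c x1"
proof -
  have "dist c x = dist c x1 \<longleftrightarrow> (norm (c - x))^2 = (norm (c - x1))^2"
    by (simp add: dist_norm)
  also have "\<dots> \<longleftrightarrow> inner (x - x1) c = (norm x ^ 2 - norm x1 ^ 2) / 2"
    by (simp add: power2_norm_eq_inner inner_diff_left inner_diff_right inner_commute)
       (auto simp: algebra_simps)
  finally show ?thesis by simp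
qed

lemma norm_add_sq:
  fixes u v :: "'a::real_inner"
  shows "(norm (u + v))^2 = (norm u)^2 + (norm v)^2 + 2 * inner u v"
  by (simp add: power2_norm_eq_inner inner_add_left inner_add_right inner_commute)

lemma subspace_line:
  assumes "subspace K" "u \<in> K" "v \<in> K"
  shows "u + t *\<^sub>R (v - u) \<in> K"
  using assms by (simp add: subspace_add subspace_scale subspace_diff)

lemma conv_identity:
  fixes c p q :: "'a::real_inner"
  shows "(1 - t) * (norm (c - p))^2 + t * (norm (c - q))^2
     = (norm (c - (p + t *\<^sub>R (q - p))))^2 + t * (1 - t) * (norm (q - p))^2"
  by (simp add: power2_norm_eq_inner inner_diff_left inner_diff_right inner_add_left
      inner_add_right inner_commute algebra_simps)

theorem mainTheorem3:
  fixes X Y QX QY Fb :: "'a::euclidean_space set" and x1 y1 c0 :: 'a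
  assumes "finite X" and "finite Y"
    and "coupled_general_position X Y"
    and "co_simplex X Y QX QY"
    and "x1 \<in> QX" and "y1 \<in> QY"
    and "c0 \<in> equi_set QX QY x1 y1"
    and "pairwise orthogonal Fb" and "\<forall>f\<in>Fb. norm f = 1"
    and "span Fb = kerA QX QY x1 y1"
    and "card Fb + (card QX + card QY) = DIM('a) + 2"
  defines "Fproj \<equiv> (\<lambda>v. \<Sum>f\<in>Fb. inner f v *\<^sub>R f)"
  defines "rxx \<equiv> norm (Fproj (x1 - c0) + c0 - x1)"
      and "rxy \<equiv> norm (Fproj (x1 - c0) + c0 - y1)"
      and "ryx \<equiv> norm (Fproj (y1 - c0) + c0 - x1)"
      and "ryy \<equiv> norm (Fproj (y1 - c0) + c0 - y1)"
  shows "(rxx \<ge> rxy \<longrightarrow> r_rel QX QY x1 y1 = rxx)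
       \<and> (ryx \<le> ryy \<longrightarrow> r_rel QX QY x1 y1 = ryy)
       \<and> (\<not> rxx \<ge> rxy \<and> \<not> ryx \<le> ryy \<longrightarrow> r_rel QX QY x1 y1 = min_circumradius (QX \<union> QY))"
proof -
  define K where "K = kerA QX QY x1 y1"
  define E where "E = equi_set QX QY x1 y1"
  have subK: "subspace K" unfolding K_def using assms(10)[symmetric] by (simp add: subspace_span)
  have PK: "Fproj v \<in> K" for v unfolding Fproj_def K_def using proj_props(1)[OF assms(8,9)] assms(10) by auto
  have Porth: "k \<in> K \<Longrightarrow> inner k (v - Fproj v) = 0" for k v
    unfolding Fproj_def K_def using proj_props(2)[OF assms(8,9)] assms(10) by auto
  have EK: "c \<in> E \<longleftrightarrow> c - c0 \<in> K" for c
  proof -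
    have c0x: "\<And>x. x \<in> QX \<Longrightarrow> inner (x - x1) c0 = (norm x ^ 2 - norm x1 ^ 2) / 2"
     and c0y: "\<And>y. y \<in> QY \<Longrightarrow> inner (y - y1) c0 = (norm y ^ 2 - norm y1 ^ 2) / 2"
      using assms(7) unfolding equi_set_def by auto
    have "c \<in> E \<longleftrightarrow> (\<forall>x\<in>QX. inner (x - x1) c = inner (x - x1) c0) \<and> (\<forall>y\<in>QY. inner (y - y1) c = inner (y - y1) c0)"
    proof -
      have c0x': "\<And>x. x \<in> QX \<Longrightarrow> (norm x)^2 - (norm x1)^2 = inner (x - x1) c0 * 2"
        using c0x by simp
      have c0y': "\<And>y. y \<in> QY \<Longrightarrow> (norm y)^2 - (norm y1)^2 = inner (y - y1) c0 * 2"
        using c0y by simp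
      show ?thesis unfolding E_def equi_set_def mem_Collect_eq
        by (auto simp: c0x' c0y')
    qed
    also have "\<dots> \<longleftrightarrow> c - c0 \<in> K"
      unfolding K_def kerA_def by (simp add: inner_diff_right)
    finally show ?thesis .
  qed
  define px where "px = Fproj (x1 - c0) + c0"
  define py where "py = Fproj (y1 - c0) + c0"
  have pxE: "px \<in> E" and pyE: "py \<in> E" using EK PK px_def py_def by auto
  have pyth: "(norm (c - z))^2 = (norm (c - p))^2 + (norm (p - z))^2"
    if "c \<in> E" "p = Fproj (z - c0) + c0" for c z p
  proof -
    have "c - p \<in> K" using that EK PK subK
    proof -
      have "c - p = (c - c0) - Fproj (z - c0)" using that(2) by simp
      moreover have "c - c0 \<in> K" using that(1) EK by simp
      ultimately show ?thesis using PK[of "z - c0"] subK by (metis subspace_diff)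
    qed
    hence o: "inner (c - p) ((z - c0) - Fproj (z - c0)) = 0" by (rule Porth)
    have "p - z = - ((z - c0) - Fproj (z - c0))" using that(2) by (simp add: algebra_simps)
    hence "inner (c - p) (p - z) = - inner (c - p) ((z - c0) - Fproj (z - c0))"
      by (simp only: inner_minus_right)
    hence o2: "inner (c - p) (p - z) = 0" using o by simp
    have "(norm (c - z))^2 = (norm (c - p))^2 + (norm (p - z))^2 + 2 * inner (c - p) (p - z)"
      using norm_add_sq[of "c - p" "p - z"] by simp
    then show ?thesis using o2 by simp
  qed
  have fx: "(norm (c - x1))^2 = (norm (c - px))^2 + rxx^2" if "c \<in> E" for c
    using pyth[OF that px_def] unfolding rxx_def px_def by simp
  have fy: "(norm (c - y1))^2 = (norm (c - py))^2 + ryy^2" if "c \<in> E" for c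
    using pyth[OF that py_def] unfolding ryy_def py_def by simp
  have rxy': "rxy = norm (px - y1)" and ryx': "ryx = norm (py - x1)"
    unfolding rxy_def ryx_def px_def py_def by simp_all
  define h where "h c = max ((norm (c - x1))\<^sup>2) ((norm (c - y1))\<^sup>2)" for c
  have rrel: "r_rel QX QY x1 y1 = sqrt (Inf (h ` E))"
    unfolding r_rel_def h_def E_def by simp
  have infmin: "Inf (h ` E) = h m" if "m \<in> E" "\<And>c. c \<in> E \<Longrightarrow> h m \<le> h c" for m
    using that by (intro cInf_eq_minimum) auto
  have c1: "r_rel QX QY x1 y1 = rxx" if "rxx \<ge> rxy"
  proof -
    have hm: "h px = rxx^2"
      using fx[OF pxE] that rxy' unfolding h_def
      by (simp add: max_def) (smt (verit, ccfv_SIG) norm_ge_zero power_mono)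
    have "h px \<le> h c" if "c \<in> E" for c
    proof -
      have "rxx^2 \<le> h c" using fx[OF that] unfolding h_def by (simp add: le_max_iff_disj)
      thus ?thesis using hm by simp
    qed
    hence "Inf (h ` E) = rxx^2" using infmin[OF pxE] hm by simp
    thus ?thesis using rrel rxx_def by simp
  qed
  have c2: "r_rel QX QY x1 y1 = ryy" if "ryx \<le> ryy"
  proof -
    have hm: "h py = ryy^2"
      using fy[OF pyE] that ryx' unfolding h_def
      by (simp add: max_def) (smt (verit, ccfv_SIG) norm_ge_zero power_mono)
    have "h py \<le> h c" if "c \<in> E" for c
    proof -
      have "ryy^2 \<le> h c" using fy[OF that] unfolding h_def by (simp add: le_max_iff_disj)
      thus ?thesis using hm by simp
    qed
    hence "Inf (h ` E) = ryy^2" using infmin[OF pyE] hm by simp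
    thus ?thesis using rrel ryy_def by simp
  qed
  have c3: "r_rel QX QY x1 y1 = min_circumradius (QX \<union> QY)" if "\<not> rxx \<ge> rxy" "\<not> ryx \<le> ryy"
  proof -
    define w where "w = py - px"
    define a where "a = rxx^2"
    define b where "b = ryy^2"
    have A1: "a < (norm w)^2 + b"
    proof -
      have "rxy^2 = (norm w)^2 + b" using fy[OF pxE] rxy' unfolding w_def b_def
        by (simp add: norm_minus_commute)
      moreover have "rxx^2 < rxy^2" using that(1) rxx_def by (simp add: power_strict_mono)
      ultimately show ?thesis unfolding a_def by simp
    qed
    have A2: "b < (norm w)^2 + a"
    proof -
      have "ryx^2 = (norm w)^2 + a" using fx[OF pyE] ryx' unfolding w_def a_def
        by (simp add: norm_minus_commute)
      moreover have "ryy^2 < ryx^2" using that(2) ryy_def by (simp add: power_strict_mono)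
      ultimately show ?thesis unfolding b_def by simp
    qed
    have wpos: "(norm w)^2 > 0"
    proof (rule ccontr)
      assume "\<not> (norm w)^2 > 0"
      hence "(norm w)^2 = 0" by (simp add: not_less)
      thus False using A1 A2 by simp
    qed
    define t where "t = ((norm w)^2 + b - a) / (2 * (norm w)^2)"
    define cs where "cs = px + t *\<^sub>R w"
    have csE: "cs \<in> E"
    proof -
      have "cs - c0 = (px - c0) + t *\<^sub>R ((py - c0) - (px - c0))" unfolding cs_def w_def
        by (simp add: algebra_simps)
      moreover have "px - c0 \<in> K" "py - c0 \<in> K" using EK pxE pyE by auto
      moreover have "(px - c0) + t *\<^sub>R ((py - c0) - (px - c0)) \<in> K"
        using \<open>px - c0 \<in> K\<close> \<open>py - c0 \<in> K\<close>
        by (rule subspace_line[OF subK])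
      ultimately have "cs - c0 \<in> K" by (simp only:)
      thus ?thesis using EK by simp
    qed
    have dx: "(norm (cs - px))^2 = t^2 * (norm w)^2" unfolding cs_def
      by (simp add: power_mult_distrib)
    have dy: "(norm (cs - py))^2 = (1 - t)^2 * (norm w)^2"
    proof -
      have "cs - py = (t - 1) *\<^sub>R w" unfolding cs_def w_def by (simp add: algebra_simps)
      thus ?thesis by (simp add: power_mult_distrib power2_commute)
    qed
    have teq: "t^2 * (norm w)^2 + a = (1 - t)^2 * (norm w)^2 + b"
    proof -
      have "2 * t * (norm w)^2 = (norm w)^2 + b - a" unfolding t_def using wpos by simp
      thus ?thesis by (simp add: power2_eq_square algebra_simps)
    qed
    have eqd: "(norm (cs - x1))^2 = (norm (cs - y1))^2"
      using fx[OF csE] fy[OF csE] dx dy teq a_def b_def by simp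
    have hcs: "h cs = (norm (cs - x1))^2" unfolding h_def using eqd by simp
    have lower: "h cs \<le> h c" if "c \<in> E" for c
    proof -
      have "(1 - t) * (norm (c - x1))^2 + t * (norm (c - y1))^2
          = (1 - t) * (norm (c - px))^2 + t * (norm (c - py))^2 + (1 - t) * a + t * b"
        using fx[OF that] fy[OF that] a_def b_def by (simp add: algebra_simps)
      also have "\<dots> = (norm (c - cs))^2 + t * (1 - t) * (norm w)^2 + (1 - t) * a + t * b"
        using conv_identity[of t c px py] unfolding cs_def w_def by simp
      also have "\<dots> \<ge> t * (1 - t) * (norm w)^2 + (1 - t) * a + t * b" by simp
      finally have ge: "(1 - t) * (norm (c - x1))^2 + t * (norm (c - y1))^2
          \<ge> t * (1 - t) * (norm w)^2 + (1 - t) * a + t * b" .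
      have "t * (1 - t) * (norm w)^2 + (1 - t) * a + t * b
          = (1 - t) * (t^2 * (norm w)^2 + a) + t * ((1 - t)^2 * (norm w)^2 + b)"
        by (simp add: power2_eq_square algebra_simps)
      also have "\<dots> = t^2 * (norm w)^2 + a" using teq by (simp add: algebra_simps)
      also have "\<dots> = h cs" using hcs fx[OF csE] dx a_def by simp
      finally have ge2: "(1 - t) * (norm (c - x1))^2 + t * (norm (c - y1))^2 \<ge> h cs"
        using ge by simp
      have t01: "0 \<le> t" "t \<le> 1"
      proof -
        have "0 < (norm w)^2 + b - a" using A1 by simp
        thus "0 \<le> t" unfolding t_def using wpos by simp
        have "(norm w)^2 + b - a \<le> 2 * (norm w)^2" using A2 by simp
        thus "t \<le> 1" unfolding t_def using wpos by simp
      qed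
      have "(1 - t) * (norm (c - x1))^2 + t * (norm (c - y1))^2 \<le> (1 - t) * h c + t * h c"
        using t01 unfolding h_def
        by (intro add_mono mult_left_mono) auto
      thus ?thesis using ge2 by (simp add: algebra_simps)
    qed
    have inf: "Inf (h ` E) = (dist cs x1)^2"
      using infmin[OF csE lower] hcs by (simp add: dist_norm)
    have Edist: "c \<in> E \<longleftrightarrow> (\<forall>x\<in>QX. dist c x = dist c x1) \<and> (\<forall>y\<in>QY. dist c y = dist c y1)" for c
      unfolding E_def equi_set_def mem_Collect_eq equi_iff by (rule refl)
    have equi: "(\<forall>q\<in>QX \<union> QY. dist c q = r) \<longleftrightarrow> c \<in> E \<and> dist c x1 = r \<and> dist c y1 = r" for c r
    proof
      assume H: "\<forall>q\<in>QX \<union> QY. dist c q = r"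
      then have "dist c x1 = r" "dist c y1 = r" using assms(5,6) by auto
      with H show "c \<in> E \<and> dist c x1 = r \<and> dist c y1 = r" using Edist by auto
    next
      assume "c \<in> E \<and> dist c x1 = r \<and> dist c y1 = r"
      then show "\<forall>q\<in>QX \<union> QY. dist c q = r" using Edist by auto
    qed
    have "min_circumradius (QX \<union> QY) = dist cs x1"
      unfolding min_circumradius_def
    proof (rule cInf_eq_minimum)
      show "dist cs x1 \<in> {r. \<exists>c. \<forall>q\<in>QX \<union> QY. dist c q = r}"
        using equi csE eqd by (auto simp: dist_norm)
      fix r assume "r \<in> {r. \<exists>c. \<forall>q\<in>QX \<union> QY. dist c q = r}"
      then obtain c where c: "c \<in> E" "dist c x1 = r" "dist c y1 = r" using equi by blast
      have "(dist cs x1)^2 \<le> r^2" using lower[OF c(1)] c hcs unfolding h_def by (simp add: dist_norm)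
      moreover have "0 \<le> r" using c(2) zero_le_dist by metis
      ultimately show "dist cs x1 \<le> r" using power2_le_imp_le by blast
    qed
    thus ?thesis using rrel inf by simp
  qed
  show ?thesis using c1 c2 c3 by blast
qed

end
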